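(* Let $\mathfrak N=\mathcal V\oplus\mathfrak Z$ be a two-step nilpotent Lie algebra of type $(p,q)$ with $[\mathfrak N,\mathfrak N]=\mathfrak Z$ equal to the center. Let $C=(C_1,\dots,C_p)\in\mathfrak{so}(q)^p$ be its structure matrices with respect to some adapted basis, viewed as linear maps $\mathbb R^q\to\mathbb R^q$. Then $\mathfrak N$ is a direct sum of two nonzero ideals if and only if there is a basis $\{A_1,\dots,A_l\}\cup\{B_1,\dots,B_k\}$ of $\mathrm{span}\{C_1,\dots,C_p\}\subset\mathfrak{so}(q)$ such that $\mathbb R^q=\mathcal V_1\oplus\mathcal V_2$, where $\mathcal V_2=\bigcap_{i=1}^l\ker A_i$ and $\mathcal V_1=\bigcap_{i=1}^k\ker B_i$.
   Context: A two-step nilpotent Lie algebra $\mathfrak N$ has type $(p,q)$ if $\dim[\mathfrak N,\mathfrak N]=p$ and the codimension is $q$. An adapted basis is a basis $\{v_1,\dots,v_q,Z_1,\dots,Z_p\}$ of $\mathfrak N$ where $\{Z_k\}$ is a basis of $[\mathfrak N,\mathfrak N]$. The structure matrices $C_k\in\mathfrak{so}(q)$ (real skew-symmetric $q\times q$ matrices) are defined by $[v_i,v_j]=\sum_k(C_k)_{ij}Z_k$. We identify $\mathcal V=\mathrm{span}\{v_i\}$ with $\mathbb R^q$. *)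

theory Defs
  imports "HOL-Analysis.Analysis"
begin

text \<open>Two-step nilpotent Lie algebra N = V + Z modelled on real^'q \<times> real^'p,
  with the adapted basis being the standard bases of real^'q (the v_i) and real^'p (the Z_k).
  The structure matrices C k give [v_i, v_j] = sum_k (C_k)_ij Z_k.\<close>

definition nbr :: "('p::finite \<Rightarrow> real^'q::finite^'q) \<Rightarrow> ((real^'q) \<times> (real^'p)) \<Rightarrow> ((real^'q) \<times> (real^'p)) \<Rightarrow> ((real^'q) \<times> (real^'p))"
  where "nbr C x y = (0, (\<chi> k. fst x \<bullet> (C k *v fst y)))"

definition derived_alg :: "('p::finite \<Rightarrow> real^'q::finite^'q) \<Rightarrow> ((real^'q) \<times> (real^'p)) set"
  where "derived_alg C = span {nbr C x y | x y. True}"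

definition center_alg :: "('p::finite \<Rightarrow> real^'q::finite^'q) \<Rightarrow> ((real^'q) \<times> (real^'p)) set"
  where "center_alg C = {x. \<forall>y. nbr C x y = 0}"

definition is_ideal :: "('p::finite \<Rightarrow> real^'q::finite^'q) \<Rightarrow> ((real^'q) \<times> (real^'p)) set \<Rightarrow> bool"
  where "is_ideal C I \<longleftrightarrow> subspace I \<and> (\<forall>x\<in>I. \<forall>y. nbr C y x \<in> I)"

definition decomposable :: "('p::finite \<Rightarrow> real^'q::finite^'q) \<Rightarrow> bool"
  where "decomposable C \<longleftrightarrow> (\<exists>I J. is_ideal C I \<and> is_ideal C J \<and> I \<noteq> {0} \<and> J \<noteq> {0}
            \<and> I \<inter> J = {0} \<and> {a + b | a b. a \<in> I \<and> b \<in> J} = UNIV)"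

definition mker :: "real^'q^'q \<Rightarrow> (real^'q) set"
  where "mker A = {v. A *v v = 0}"

end

theory Submission
  imports Defs
begin


definition br :: "('p::finite \<Rightarrow> real^'q::finite^'q) \<Rightarrow> real^'q \<Rightarrow> real^'q \<Rightarrow> real^'p"
  where "br C u v = (\<chi> k. u \<bullet> (C k *v v))"

definition Mat :: "('p::finite \<Rightarrow> real^'q::finite^'q) \<Rightarrow> real^'p \<Rightarrow> real^'q^'q"
  where "Mat C m = (\<Sum>k\<in>UNIV. m$k *\<^sub>R C k)"

lemma nbr_eq: "nbr C x y = (0, br C (fst x) (fst y))"
  by (simp add: nbr_def br_def)

lemma br_add1: "br C (a + b) v = br C a v + br C b v"
  by (simp add: br_def vec_eq_iff inner_add_left)
lemma br_add2: "br C v (a + b) = br C v a + br C v b"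
  by (simp add: br_def vec_eq_iff inner_add_right matrix_vector_right_distrib)
lemma br_scale1: "br C (c *\<^sub>R a) v = c *\<^sub>R br C a v"
  by (simp add: br_def vec_eq_iff)
lemma br_scale2: "br C v (c *\<^sub>R a) = c *\<^sub>R br C v a"
  by (simp add: br_def vec_eq_iff matrix_vector_mult_scaleR)
lemma br_zero1[simp]: "br C 0 v = 0" by (simp add: br_def vec_eq_iff)
lemma br_zero2[simp]: "br C v 0 = 0" by (simp add: br_def vec_eq_iff)



lemma neg_mv: "(- (A::real^'q::finite^'q)) *v u = - (A *v u)"
  by (simp add: matrix_vector_mult_def vec_eq_iff sum_negf)

lemma skew_inner: assumes "transpose A = - (A::real^'q::finite^'q)"
  shows "u \<bullet> (A *v v) = - (v \<bullet> (A *v u))"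
proof -
  have "u \<bullet> (A *v v) = (u v* A) \<bullet> v" by (simp only: dot_lmul_matrix)
  also have "u v* A = transpose A *v u" by (simp only: transpose_matrix_vector)
  also have "\<dots> = - (A *v u)" by (simp only: assms neg_mv)
  finally show ?thesis by (metis inner_commute inner_minus_left)
qed

lemma br_skew: assumes "\<And>k. transpose (C k) = - C k" shows "br C u v = - br C v u"
  unfolding br_def
  by (rule vec_eq_iff[THEN iffD2], rule allI, simp only: vector_uminus_component vec_lambda_beta, rule skew_inner[OF assms])
lemma Mat_mult: "Mat C m *v y = (\<Sum>k\<in>UNIV. m$k *\<^sub>R (C k *v y))"
  apply (simp add: Mat_def vec_eq_iff matrix_vector_mult_def sum_distrib_left algebra_simps)
  apply (rule allI, rule sum.swap)
  done

lemma Mat_inner: "m \<bullet> br C x y = x \<bullet> (Mat C m *v y)"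
  apply (simp add: Mat_mult inner_vec_def br_def inner_sum_right sum_distrib_left mult_ac)
  apply (rule sum.swap)
  done

lemma linear_Mat: "linear (Mat C)"
  by (rule linearI) (simp_all add: Mat_def sum.distrib scaleR_add_left scaleR_sum_right)



lemma Mat_add: "Mat C (a + b) = Mat C a + Mat C b"
  using linear_Mat[of C] by (simp add: linear_add)
lemma Mat_diff: "Mat C (a - b) = Mat C a - Mat C b"
  using linear_Mat[of C] by (simp add: linear_diff)
lemma Mat_zero[simp]: "Mat C 0 = 0"
  by (simp add: Mat_def)

lemma Mat_axis: "Mat C (axis k 1) = C k"
proof -
  have "Mat C (axis k 1) = (\<Sum>j\<in>UNIV. (if j = k then C j else 0))"
    unfolding Mat_def by (rule sum.cong) (auto simp: axis_def)
  also have "\<dots> = C k" by (simp add: sum.delta)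
  finally show ?thesis .
qed

lemma Mat_skew: assumes "\<And>k. transpose (C k) = - C k"
  shows "x \<bullet> (Mat C m *v y) = - (y \<bullet> (Mat C m *v x))"
proof -
  have "x \<bullet> (Mat C m *v y) = m \<bullet> br C x y" by (simp only: Mat_inner)
  also have "\<dots> = m \<bullet> (- br C y x)" by (simp only: br_skew[OF assms, where u=x and v=y])
  also have "\<dots> = - (m \<bullet> br C y x)" by (rule inner_minus_right)
  also have "\<dots> = - (y \<bullet> (Mat C m *v x))" by (simp only: Mat_inner)
  finally show ?thesis .
qed

lemma subspace_mker: "subspace {v. (A::real^'q::finite^'q) *v v = 0}"
  unfolding subspace_def by (simp add: matrix_vector_right_distrib matrix_vector_mult_scaleR)

lemma subspace_Mat_kill: "subspace {m. Mat C m *v v = 0}"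
  unfolding subspace_def
  by (simp add: Mat_add matrix_vector_mult_add_rdistrib linear_scale[OF linear_Mat] flip: scaleR_matrix_vector_assoc)

lemma subspace_mat_kill: "subspace {M::real^'q::finite^'q. M *v v = 0}"
  unfolding subspace_def
  by (simp add: matrix_vector_mult_add_rdistrib flip: scaleR_matrix_vector_assoc)

lemma subspace_mat_inner: "subspace {M::real^'q::finite^'q. x \<bullet> (M *v v) = 0}"
  unfolding subspace_def
  by (simp add: matrix_vector_mult_add_rdistrib inner_add_right flip: scaleR_matrix_vector_assoc)

lemma subspace_perp: "subspace {z::real^'p::finite. m \<bullet> z = 0}"
  unfolding subspace_def by (simp add: inner_add_right)

lemma subspace_prod: "subspace A \<Longrightarrow> subspace B \<Longrightarrow> subspace (A \<times> B)"
  unfolding subspace_def by (auto simp: zero_prod_def)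

locale nilp =
  fixes C :: "'p::finite \<Rightarrow> real^'q::finite^'q"
  assumes skew: "\<And>k. transpose (C k) = - C k"
    and derived: "derived_alg C = {0} \<times> UNIV"
    and center: "center_alg C = {0} \<times> UNIV"
begin

lemma anti: "br C u v = - br C v u"
  by (rule br_skew[OF skew])

lemma central: assumes "\<And>y. br C u y = 0" shows "u = 0"
proof -
  have "(u, 0) \<in> center_alg C" using assms by (simp add: center_alg_def nbr_eq zero_prod_def)
  then show ?thesis using center by simp
qed

definition "BR = {br C u v | u v. True}"

lemma span_BR: "span BR = UNIV"
proof -
  let ?S = "{nbr C x y | x y. True}"
  have e: "snd ` ?S = BR"
  proof
    show "snd ` ?S \<subseteq> BR"
    proof
      fix z assume "z \<in> snd ` ?S"
      then obtain x y where "z = snd (nbr C x y)" by blast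
      then have "z = br C (fst x) (fst y)" by (simp add: nbr_eq)
      then show "z \<in> BR" unfolding BR_def by blast
    qed
    show "BR \<subseteq> snd ` ?S"
    proof
      fix z assume "z \<in> BR"
      then obtain u v where z: "z = br C u v" by (auto simp: BR_def)
      have "z = snd (nbr C (u,0) (v,0))" by (simp add: z nbr_eq)
      then show "z \<in> snd ` ?S" by blast
    qed
  qed
  have l: "span (snd ` ?S) = snd ` span ?S" by (rule span_linear_image[OF linear_snd])
  have "span ?S = {0} \<times> UNIV" using derived by (simp only: derived_alg_def)
  then have "snd ` span ?S = UNIV" by force
  then show ?thesis using e l by simp
qed

lemma BR_perp: assumes "\<And>u v. m \<bullet> br C u v = 0" shows "m = 0"
proof -
  have "BR \<subseteq> {z. m \<bullet> z = 0}" using assms by (auto simp: BR_def)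
  then have "span BR \<subseteq> {z. m \<bullet> z = 0}" by (rule span_minimal[OF _ subspace_perp])
  then have "m \<in> {z. m \<bullet> z = 0}" using span_BR by blast
  then show ?thesis by simp
qed

lemma Mat_inj0: assumes "Mat C m = 0" shows "m = 0"
  by (rule BR_perp) (simp add: Mat_inner assms)

lemma Mat_inj: "inj (Mat C)"
  by (rule injI) (metis Mat_diff Mat_inj0 eq_iff_diff_eq_0)

lemma range_Mat: "range (Mat C) = span (range C)"
proof
  show "range (Mat C) \<subseteq> span (range C)"
  proof
    fix M assume "M \<in> range (Mat C)"
    then obtain m where mm: "M = Mat C m" by blast
    show "M \<in> span (range C)" unfolding mm Mat_def
      by (intro span_sum span_mul span_base rangeI)
  qed
  have "range C \<subseteq> range (Mat C)" using Mat_axis by (metis image_subsetI rangeI)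
  moreover have "subspace (range (Mat C))"
    by (rule linear_subspace_image[OF linear_Mat subspace_UNIV])
  ultimately show "span (range C) \<subseteq> range (Mat C)" by (rule span_minimal)
qed

lemma skew_span: assumes "M \<in> span (range C)" shows "x \<bullet> (M *v y) = - (y \<bullet> (M *v x))"
proof -
  have "M \<in> range (Mat C)" using assms range_Mat by simp
  then obtain m where mm: "M = Mat C m" by blast
  show ?thesis unfolding mm by (rule Mat_skew[OF skew])
qed

end


context nilp begin

lemma subspace_kers: "subspace (\<Inter>A\<in>S. mker A)"
proof -
  have "subspace (\<Inter> ((\<lambda>A. mker A) ` S))"
    by (rule subspace_Inter) (auto simp: mker_def subspace_mker)
  then show ?thesis by simp
qed

lemma mat_zero_if_kills: assumes "\<And>x. (A::real^'q^'q) *v x = 0" shows "A = 0"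
  using assms by (simp add: matrix_eq)

lemma back_dir:
  assumes neA: "As \<noteq> []" and neB: "Bs \<noteq> []" and ind: "independent (set (As @ Bs))"
   and sp: "span (set (As @ Bs)) = span (range C)"
   and V2: "V2 = (\<Inter>A\<in>set As. mker A)" and V1: "V1 = (\<Inter>B\<in>set Bs. mker B)"
   and int: "V1 \<inter> V2 = {0}" and sum: "{a + b | a b. a \<in> V1 \<and> b \<in> V2} = UNIV"
  shows "decomposable C"
proof -
  have sub1: "subspace V1" unfolding V1 by (rule subspace_kers)
  have sub2: "subspace V2" unfolding V2 by (rule subspace_kers)
  have dec: "\<exists>a b. a \<in> V1 \<and> b \<in> V2 \<and> x = a + b" for x
    using sum by blast
  have killA: "A *v v = 0" if "A \<in> set As" "v \<in> V2" for A v
    using that by (auto simp: V2 mker_def)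
  have killB: "B *v v = 0" if "B \<in> set Bs" "v \<in> V1" for B v
    using that by (auto simp: V1 mker_def)
  have inspan: "M \<in> span (range C)" if "M \<in> set (As @ Bs)" for M
    using that sp span_base by metis
  have cross: "br C x y = 0" if x: "x \<in> V2" and y: "y \<in> V1" for x y
  proof -
    have "set (As @ Bs) \<subseteq> {M. x \<bullet> (M *v y) = 0}"
    proof
      fix M assume M: "M \<in> set (As @ Bs)"
      show "M \<in> {M. x \<bullet> (M *v y) = 0}"
      proof (cases "M \<in> set As")
        case True
        have "x \<bullet> (M *v y) = - (y \<bullet> (M *v x))" by (rule skew_span[OF inspan[OF M]])
        then show ?thesis using killA[OF True x] by simp
      next
        case False
        then have "M \<in> set Bs" using M by simp
        then show ?thesis using killB y by simp
      qed
    qed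
    then have "span (set (As @ Bs)) \<subseteq> {M. x \<bullet> (M *v y) = 0}"
      by (rule span_minimal[OF _ subspace_mat_inner])
    then have "x \<bullet> (C k *v y) = 0" for k using sp span_base[of "C k" "range C"] by blast
    then show ?thesis by (simp add: br_def vec_eq_iff)
  qed
  have cross': "br C x y = 0" if "x \<in> V1" "y \<in> V2" for x y
    using cross[OF that(2) that(1)] anti[of x y] by simp
  define Z1 where "Z1 = span {br C u v | u v. u \<in> V1 \<and> v \<in> V1}"
  define Z2 where "Z2 = span {br C u v | u v. u \<in> V2 \<and> v \<in> V2}"
  have brZ1: "br C u v \<in> Z1" if "u \<in> V1" "v \<in> V1" for u v
    unfolding Z1_def using that by (intro span_base) blast
  have brZ2: "br C u v \<in> Z2" if "u \<in> V2" "v \<in> V2" for u v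
    unfolding Z2_def using that by (intro span_base) blast
  define I where "I = V1 \<times> Z1"
  define J where "J = V2 \<times> Z2"
  have idI: "is_ideal C I"
    unfolding is_ideal_def
  proof
    show "subspace I" unfolding I_def Z1_def by (rule subspace_prod[OF sub1 subspace_span])
    show "\<forall>x\<in>I. \<forall>y. nbr C y x \<in> I"
    proof (intro ballI allI)
      fix x and y :: "(real^'q) \<times> (real^'p)" assume "x \<in> I"
      then have x1: "fst x \<in> V1" by (auto simp: I_def)
      obtain a b where ab: "a \<in> V1" "b \<in> V2" "fst y = a + b" using dec by blast
      have "br C (fst y) (fst x) = br C a (fst x)"
        using ab cross[OF ab(2) x1] by (simp add: br_add1)
      then have "br C (fst y) (fst x) \<in> Z1" using brZ1[OF ab(1) x1] by simp
      then show "nbr C y x \<in> I" by (simp add: nbr_eq I_def subspace_0[OF sub1])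
    qed
  qed
  have idJ: "is_ideal C J"
    unfolding is_ideal_def
  proof
    show "subspace J" unfolding J_def Z2_def by (rule subspace_prod[OF sub2 subspace_span])
    show "\<forall>x\<in>J. \<forall>y. nbr C y x \<in> J"
    proof (intro ballI allI)
      fix x and y :: "(real^'q) \<times> (real^'p)" assume "x \<in> J"
      then have x2: "fst x \<in> V2" by (auto simp: J_def)
      obtain a b where ab: "a \<in> V1" "b \<in> V2" "fst y = a + b" using dec by blast
      have "br C (fst y) (fst x) = br C b (fst x)"
        using ab cross'[OF ab(1) x2] by (simp add: br_add1)
      then have "br C (fst y) (fst x) \<in> Z2" using brZ2[OF ab(2) x2] by simp
      then show "nbr C y x \<in> J" by (simp add: nbr_eq J_def subspace_0[OF sub2])
    qed
  qed
  have indep0: "0 \<notin> set (As @ Bs)" using ind dependent_zero by blast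
  have V1ne: "\<exists>v\<in>V1. v \<noteq> 0"
  proof (rule ccontr)
    assume "\<not> ?thesis"
    then have "x \<in> V2" for x using dec[of x] by auto
    then have "hd As *v x = 0" for x using killA[of "hd As" x] neA by simp
    then have "hd As = 0" by (rule mat_zero_if_kills)
    then show False using indep0 neA by (metis Un_iff hd_in_set set_append)
  qed
  have V2ne: "\<exists>v\<in>V2. v \<noteq> 0"
  proof (rule ccontr)
    assume "\<not> ?thesis"
    then have "x \<in> V1" for x using dec[of x] by auto
    then have "hd Bs *v x = 0" for x using killB[of "hd Bs" x] neB by simp
    then have "hd Bs = 0" by (rule mat_zero_if_kills)
    then show False using indep0 neB by (metis Un_iff hd_in_set set_append)
  qed
  have Ine: "I \<noteq> {0}"
  proof -
    obtain v where "v \<in> V1" "v \<noteq> 0" using V1ne by blast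
    then have "(v, 0) \<in> I" "(v, 0) \<noteq> (0::(real^'q) \<times> (real^'p))"
      by (auto simp: I_def Z1_def span_zero zero_prod_def)
    then show ?thesis by (auto simp: zero_prod_def)
  qed
  have Jne: "J \<noteq> {0}"
  proof -
    obtain v where "v \<in> V2" "v \<noteq> 0" using V2ne by blast
    then have "(v, 0) \<in> J" "(v, 0) \<noteq> (0::(real^'q) \<times> (real^'p))"
      by (auto simp: J_def Z2_def span_zero zero_prod_def)
    then show ?thesis by (auto simp: zero_prod_def)
  qed
  have Zint: "z = 0" if z1: "z \<in> Z1" and z2: "z \<in> Z2" for z
  proof -
    have "Mat C z \<in> span (range C)" using range_Mat by blast
    then have "Mat C z \<in> span (set As \<union> set Bs)" using sp by simp
    then obtain a b where ab: "a \<in> span (set As)" "b \<in> span (set Bs)" "Mat C z = a + b"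
      unfolding span_Un by blast
    have "span (set As) \<subseteq> range (Mat C)" "span (set Bs) \<subseteq> range (Mat C)"
      using span_mono[of "set As" "set (As @ Bs)"] span_mono[of "set Bs" "set (As @ Bs)"] sp range_Mat
      by auto
    then obtain ma mb where ma: "a = Mat C ma" and mb: "b = Mat C mb" using ab by blast
    have "Mat C z = Mat C (ma + mb)" using ab ma mb by (simp only: Mat_add)
    then have zeq: "z = ma + mb" using Mat_inj by (simp add: inj_eq)
    have bk: "b *v v = 0" if "v \<in> V1" for v
    proof -
      have "span (set Bs) \<subseteq> {M. M *v v = 0}"
        by (rule span_minimal[OF _ subspace_mat_kill]) (use killB that in blast)
      then show ?thesis using ab by blast
    qed
    have ak: "a *v v = 0" if "v \<in> V2" for v
    proof -
      have "span (set As) \<subseteq> {M. M *v v = 0}"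
        by (rule span_minimal[OF _ subspace_mat_kill]) (use killA that in blast)
      then show ?thesis using ab by blast
    qed
    have "Z1 \<subseteq> {w. mb \<bullet> w = 0}" unfolding Z1_def
      by (rule span_minimal[OF _ subspace_perp]) (auto simp: Mat_inner mb[symmetric] bk)
    then have 1: "mb \<bullet> z = 0" using z1 by blast
    have "Z2 \<subseteq> {w. ma \<bullet> w = 0}" unfolding Z2_def
      by (rule span_minimal[OF _ subspace_perp]) (auto simp: Mat_inner ma[symmetric] ak)
    then have 2: "ma \<bullet> z = 0" using z2 by blast
    have "z \<bullet> z = 0" using 1 2 zeq by (simp add: inner_add_left)
    then show ?thesis by simp
  qed
  have IJ: "I \<inter> J = {0}"
    using int Zint by (auto simp: I_def J_def zero_prod_def Z1_def Z2_def span_zero subspace_0[OF sub1] subspace_0[OF sub2])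
  have Zsum: "\<exists>z1 z2. z1 \<in> Z1 \<and> z2 \<in> Z2 \<and> z = z1 + z2" for z
  proof -
    let ?S = "{x + y | x y. x \<in> Z1 \<and> y \<in> Z2}"
    have "BR \<subseteq> ?S"
    proof
      fix w assume "w \<in> BR"
      then obtain u v where w: "w = br C u v" by (auto simp: BR_def)
      obtain u1 u2 where u: "u1 \<in> V1" "u2 \<in> V2" "u = u1 + u2" using dec by blast
      obtain v1 v2 where v: "v1 \<in> V1" "v2 \<in> V2" "v = v1 + v2" using dec by blast
      have "w = br C u1 v1 + br C u2 v2"
        using u v cross[of u2 v1] cross'[of u1 v2] by (simp add: w br_add1 br_add2)
      then show "w \<in> ?S" using brZ1 brZ2 u v by blast
    qed
    then have "span BR \<subseteq> ?S"
      by (rule span_minimal[OF _ subspace_sums]) (simp_all add: Z1_def Z2_def)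
    then show ?thesis using span_BR by blast
  qed
  have IJsum: "{a + b | a b. a \<in> I \<and> b \<in> J} = UNIV"
  proof -
    have "x \<in> {a + b | a b. a \<in> I \<and> b \<in> J}" for x
    proof -
      obtain a b where ab: "a \<in> V1" "b \<in> V2" "fst x = a + b" using dec by blast
      obtain z1 z2 where z: "z1 \<in> Z1" "z2 \<in> Z2" "snd x = z1 + z2" using Zsum by blast
      have "x = (a, z1) + (b, z2)" using ab z by (simp add: prod_eq_iff)
      moreover have "(a, z1) \<in> I" "(b, z2) \<in> J" using ab z by (auto simp: I_def J_def)
      ultimately show ?thesis by blast
    qed
    then show ?thesis by blast
  qed
  show ?thesis unfolding decomposable_def using idI idJ Ine Jne IJ IJsum by blast
qed

end


context nilp begin

lemma ker_char:
  assumes dec: "\<And>x. \<exists>a\<in>Va. \<exists>b\<in>Vb. x = a + b"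
    and ka: "\<And>m v. m \<in> Wa \<Longrightarrow> v \<in> Va \<Longrightarrow> Mat C m *v v = 0"
    and kb: "\<And>m v. m \<in> Wb \<Longrightarrow> v \<in> Vb \<Longrightarrow> Mat C m *v v = 0"
    and wsum: "\<And>m. \<exists>m1\<in>Wa. \<exists>m2\<in>Wb. m = m1 + m2"
    and bb: "BB \<subseteq> Wb" "Wb \<subseteq> span BB"
  shows "(\<Inter>A\<in>Mat C ` BB. mker A) = Vb"
proof
  show "Vb \<subseteq> (\<Inter>A\<in>Mat C ` BB. mker A)"
    using kb bb by (auto simp: mker_def)
  show "(\<Inter>A\<in>Mat C ` BB. mker A) \<subseteq> Vb"
  proof
    fix x assume "x \<in> (\<Inter>A\<in>Mat C ` BB. mker A)"
    then have "BB \<subseteq> {m. Mat C m *v x = 0}" by (auto simp: mker_def)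
    then have "span BB \<subseteq> {m. Mat C m *v x = 0}" by (rule span_minimal[OF _ subspace_Mat_kill])
    then have xb: "Mat C m *v x = 0" if "m \<in> Wb" for m using bb that by blast
    obtain a b where ab: "a \<in> Va" "b \<in> Vb" "x = a + b" using dec by blast
    have ma: "Mat C m *v a = 0" for m
    proof -
      obtain m1 m2 where m: "m1 \<in> Wa" "m2 \<in> Wb" "m = m1 + m2" using wsum by blast
      have "Mat C m2 *v a = Mat C m2 *v x - Mat C m2 *v b"
        using ab by (simp add: matrix_vector_right_distrib)
      also have "\<dots> = 0" using xb[OF m(2)] kb[OF m(2) ab(2)] by simp
      finally have "Mat C m2 *v a = 0" .
      moreover have "Mat C m1 *v a = 0" by (rule ka[OF m(1) ab(1)])
      ultimately show ?thesis using m by (simp add: Mat_add matrix_vector_mult_add_rdistrib)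
    qed
    have "br C y a = 0" for y
    proof -
      have "y \<bullet> (C k *v a) = 0" for k using ma[of "axis k 1"] by (simp add: Mat_axis)
      then show ?thesis by (simp add: br_def vec_eq_iff)
    qed
    then have "br C a y = 0" for y using anti[of a y] by simp
    then have "a = 0" by (rule central)
    then show "x \<in> Vb" using ab by simp
  qed
qed

lemma nbr_anti: "nbr C x y = - nbr C y x"
  using anti[of "fst x" "fst y"] by (simp add: nbr_eq)

lemma fwd_dir:
  assumes "decomposable C"
  shows "\<exists>As Bs :: (real^'q^'q) list.
        As \<noteq> [] \<and> Bs \<noteq> [] \<and> distinct (As @ Bs) \<and> independent (set (As @ Bs))
      \<and> span (set (As @ Bs)) = span (range C)
      \<and> (let V2 = (\<Inter>A\<in>set As. mker A); V1 = (\<Inter>B\<in>set Bs. mker B)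
         in V1 \<inter> V2 = {0} \<and> {a + b | a b. a \<in> V1 \<and> b \<in> V2} = UNIV)"
proof -
  obtain I J where idI: "is_ideal C I" and idJ: "is_ideal C J" and Ine: "I \<noteq> {0}" and Jne: "J \<noteq> {0}"
    and IJ: "I \<inter> J = {0}" and sIJ: "{a + b | a b. a \<in> I \<and> b \<in> J} = UNIV"
    using assms unfolding decomposable_def by blast
  have subI: "subspace I" and subJ: "subspace J" using idI idJ by (auto simp: is_ideal_def)
  have rI: "nbr C y x \<in> I" if "x \<in> I" for x y using idI that unfolding is_ideal_def by blast
  have rJ: "nbr C y x \<in> J" if "x \<in> J" for x y using idJ that unfolding is_ideal_def by blast
  have lI: "nbr C x y \<in> I" if "x \<in> I" for x y
    using subspace_neg[OF subI rI[OF that, of y]] nbr_anti[of x y] by simp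
  have comm: "br C (fst a) (fst b) = 0" if "a \<in> I" "b \<in> J" for a b
  proof -
    have "nbr C a b \<in> I \<inter> J" using lI[OF that(1)] rJ[OF that(2)] by blast
    then have "nbr C a b = 0" using IJ by blast
    then show ?thesis by (simp add: nbr_eq zero_prod_def)
  qed
  define V1 where "V1 = fst ` I"
  define V2 where "V2 = fst ` J"
  define Z1 where "Z1 = {z. (0, z) \<in> I}"
  define Z2 where "Z2 = {z. (0, z) \<in> J}"
  have decx: "\<exists>a b. a \<in> I \<and> b \<in> J \<and> x = a + b" for x using sIJ by blast
  have comm12: "br C u w = 0" if "u \<in> V1" "w \<in> V2" for u w
    using that comm by (auto simp: V1_def V2_def)
  have comm21: "br C w u = 0" if "u \<in> V1" "w \<in> V2" for u w
    using comm12[OF that] anti[of w u] by simp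
  have decV: "\<exists>a\<in>V1. \<exists>b\<in>V2. v = a + b" for v
  proof -
    obtain a b where "a \<in> I" "b \<in> J" "(v, 0::real^'p) = a + b" using decx by blast
    then show ?thesis unfolding V1_def V2_def by (metis fst_add fst_conv image_eqI)
  qed
  have V12: "V1 \<inter> V2 = {0}"
  proof
    show "{0} \<subseteq> V1 \<inter> V2"
      using subspace_0[OF subI] subspace_0[OF subJ] by (force simp: V1_def V2_def zero_prod_def)
    show "V1 \<inter> V2 \<subseteq> {0}"
    proof
      fix u assume u: "u \<in> V1 \<inter> V2"
      have "br C u y = 0" for y
      proof -
        obtain y1 y2 where y: "y1 \<in> V1" "y2 \<in> V2" "y = y1 + y2" using decV by blast
        show ?thesis using y u comm21[of y1 u] comm12[of u y2] by (simp add: br_add2)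
      qed
      then show "u \<in> {0}" using central by blast
    qed
  qed
  have subV1: "subspace V1" unfolding V1_def by (rule linear_subspace_image[OF linear_fst subI])
  have subV2: "subspace V2" unfolding V2_def by (rule linear_subspace_image[OF linear_fst subJ])
  have subZ1: "subspace Z1"
    unfolding subspace_def Z1_def
    using subspace_0[OF subI] subspace_add[OF subI] subspace_scale[OF subI]
    by (auto simp: zero_prod_def) (metis add_0 add_Pair, metis scaleR_Pair scaleR_zero_right)
  have subZ2: "subspace Z2"
    unfolding subspace_def Z2_def
    using subspace_0[OF subJ] subspace_add[OF subJ] subspace_scale[OF subJ]
    by (auto simp: zero_prod_def) (metis add_0 add_Pair, metis scaleR_Pair scaleR_zero_right)
  have brZ1: "br C u v \<in> Z1" if uv: "u \<in> V1" "v \<in> V1" for u v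
  proof -
    obtain a b where "a \<in> I" "b \<in> I" "u = fst a" "v = fst b" using uv unfolding V1_def by blast
    then show ?thesis using rI[of b a] by (simp add: Z1_def nbr_eq)
  qed
  have brZ2: "br C u v \<in> Z2" if uv: "u \<in> V2" "v \<in> V2" for u v
  proof -
    obtain a b where "a \<in> J" "b \<in> J" "u = fst a" "v = fst b" using uv unfolding V2_def by blast
    then show ?thesis using rJ[of b a] by (simp add: Z2_def nbr_eq)
  qed
  have Z12: "Z1 \<inter> Z2 = {0}"
    using IJ subspace_0[OF subZ1] subspace_0[OF subZ2] by (auto simp: Z1_def Z2_def zero_prod_def)
  have Zsum: "{x + y | x y. x \<in> Z1 \<and> y \<in> Z2} = UNIV"
  proof -
    let ?S = "{x + y | x y. x \<in> Z1 \<and> y \<in> Z2}"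
    have "BR \<subseteq> ?S"
    proof
      fix w assume "w \<in> BR"
      then obtain u v where w: "w = br C u v" by (auto simp: BR_def)
      obtain u1 u2 where u: "u1 \<in> V1" "u2 \<in> V2" "u = u1 + u2" using decV by blast
      obtain v1 v2 where v: "v1 \<in> V1" "v2 \<in> V2" "v = v1 + v2" using decV by blast
      have "w = br C u1 v1 + br C u2 v2"
        using u v comm21[of v1 u2] comm12[of u1 v2] by (simp add: w br_add1 br_add2)
      then show "w \<in> ?S" using brZ1 brZ2 u v by blast
    qed
    then have "span BR \<subseteq> ?S"
      by (rule span_minimal[OF _ subspace_sums[OF subZ1 subZ2]])
    then show ?thesis using span_BR by blast
  qed
  have Z1ne: "\<not> Z1 \<subseteq> {0}"
  proof -
    obtain a where a: "a \<in> I" "a \<noteq> 0" using Ine subspace_0[OF subI] by blast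
    show ?thesis
    proof (cases "fst a = 0")
      case True
      then have "a = (0, snd a)" by (simp add: prod_eq_iff)
      then have "snd a \<in> Z1" using a(1) unfolding Z1_def by (metis mem_Collect_eq)
      moreover have "snd a \<noteq> 0" using a True by (auto simp: zero_prod_def prod_eq_iff)
      ultimately have "snd a \<in> Z1 \<and> snd a \<noteq> 0" by blast
      then show ?thesis by blast
    next
      case False
      then obtain y where y: "br C (fst a) y \<noteq> 0" using central by blast
      obtain y1 y2 where yy: "y1 \<in> V1" "y2 \<in> V2" "y = y1 + y2" using decV by blast
      have fa: "fst a \<in> V1" using a by (simp add: V1_def)
      have "br C (fst a) y = br C (fst a) y1" using comm12[OF fa yy(2)] yy by (simp add: br_add2)
      then show ?thesis using y brZ1[OF fa yy(1)] by auto
    qed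
  qed
  have Z2ne: "\<not> Z2 \<subseteq> {0}"
  proof -
    obtain a where a: "a \<in> J" "a \<noteq> 0" using Jne subspace_0[OF subJ] by blast
    show ?thesis
    proof (cases "fst a = 0")
      case True
      then have "a = (0, snd a)" by (simp add: prod_eq_iff)
      then have "snd a \<in> Z2" using a(1) unfolding Z2_def by (metis mem_Collect_eq)
      moreover have "snd a \<noteq> 0" using a True by (auto simp: zero_prod_def prod_eq_iff)
      ultimately have "snd a \<in> Z2 \<and> snd a \<noteq> 0" by blast
      then show ?thesis by blast
    next
      case False
      then obtain y where y: "br C (fst a) y \<noteq> 0" using central by blast
      obtain y1 y2 where yy: "y1 \<in> V1" "y2 \<in> V2" "y = y1 + y2" using decV by blast
      have fa: "fst a \<in> V2" using a by (simp add: V2_def)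
      have "br C (fst a) y = br C (fst a) y2" using comm21[OF yy(1) fa] yy by (simp add: br_add2)
      then show ?thesis using y brZ2[OF fa yy(2)] by auto
    qed
  qed
  define W1 where "W1 = {m. \<forall>z\<in>Z1. m \<bullet> z = 0}"
  define W2 where "W2 = {m. \<forall>z\<in>Z2. m \<bullet> z = 0}"
  have kill1: "Mat C m *v v = 0" if "m \<in> W1" "v \<in> V1" for m v
  proof -
    let ?w = "Mat C m *v v"
    obtain w1 w2 where w: "w1 \<in> V1" "w2 \<in> V2" "?w = w1 + w2" using decV by blast
    have "?w \<bullet> ?w = m \<bullet> br C ?w v" by (simp add: Mat_inner)
    also have "br C ?w v = br C w1 v" using w comm21[OF that(2) w(2)] by (simp add: br_add1)
    also have "m \<bullet> \<dots> = 0" using that brZ1[OF w(1) that(2)] by (simp add: W1_def)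
    finally show ?thesis by simp
  qed
  have kill2: "Mat C m *v v = 0" if "m \<in> W2" "v \<in> V2" for m v
  proof -
    let ?w = "Mat C m *v v"
    obtain w1 w2 where w: "w1 \<in> V1" "w2 \<in> V2" "?w = w1 + w2" using decV by blast
    have "?w \<bullet> ?w = m \<bullet> br C ?w v" by (simp add: Mat_inner)
    also have "br C ?w v = br C w2 v" using w comm12[OF w(1) that(2)] by (simp add: br_add1)
    also have "m \<bullet> \<dots> = 0" using that brZ2[OF w(2) that(2)] by (simp add: W2_def)
    finally show ?thesis by simp
  qed
  have subW1: "subspace W1" unfolding subspace_def W1_def by (simp add: inner_add_left)
  have subW2: "subspace W2" unfolding subspace_def W2_def by (simp add: inner_add_left)
  have W12: "W1 \<inter> W2 = {0}"
  proof
    show "{0} \<subseteq> W1 \<inter> W2" by (simp add: W1_def W2_def)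
    show "W1 \<inter> W2 \<subseteq> {0}"
    proof
      fix m assume m: "m \<in> W1 \<inter> W2"
      obtain z1 z2 where "z1 \<in> Z1" "z2 \<in> Z2" "m = z1 + z2" using Zsum by blast
      then have "m \<bullet> m = 0" using m by (simp add: W1_def W2_def inner_add_right)
      then show "m \<in> {0}" by simp
    qed
  qed
  have eW1: "{y \<in> UNIV. \<forall>x\<in>Z1. orthogonal x y} = W1"
    by (auto simp: W1_def orthogonal_def inner_commute)
  have eW2: "{y \<in> UNIV. \<forall>x\<in>Z2. orthogonal x y} = W2"
    by (auto simp: W2_def orthogonal_def inner_commute)
  have dW1: "dim W1 + dim Z1 = dim (UNIV :: (real^'p) set)"
    using dim_subspace_orthogonal_to_vectors[OF subZ1 subspace_UNIV] eW1 by simp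
  have dW2: "dim W2 + dim Z2 = dim (UNIV :: (real^'p) set)"
    using dim_subspace_orthogonal_to_vectors[OF subZ2 subspace_UNIV] eW2 by simp
  have dZ: "dim Z1 + dim Z2 = dim (UNIV :: (real^'p) set)"
    using dim_sums_Int[OF subZ1 subZ2] Zsum Z12 by simp
  have dWs: "dim {x + y | x y. x \<in> W1 \<and> y \<in> W2} = dim (UNIV :: (real^'p) set)"
    using dim_sums_Int[OF subW1 subW2] W12 dW1 dW2 dZ by simp
  have Wsum: "{x + y | x y. x \<in> W1 \<and> y \<in> W2} = UNIV"
    by (rule subspace_dim_equal[OF subspace_sums[OF subW1 subW2] subspace_UNIV subset_UNIV]) (simp add: dWs)
  have dpos1: "dim W1 > 0" using dW1 dZ Z2ne dim_eq_0[of Z2] by linarith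
  have dpos2: "dim W2 > 0" using dW2 dZ Z1ne dim_eq_0[of Z1] by linarith
  obtain BA where BA: "BA \<subseteq> W2" "independent BA" "W2 \<subseteq> span BA" "card BA = dim W2"
    using basis_exists by blast
  obtain BB where BB: "BB \<subseteq> W1" "independent BB" "W1 \<subseteq> span BB" "card BB = dim W1"
    using basis_exists by blast
  have fA: "finite BA" using BA(2) by (rule finiteI_independent)
  have fB: "finite BB" using BB(2) by (rule finiteI_independent)
  obtain la where la: "set la = BA" "distinct la" using finite_distinct_list[OF fA] by blast
  obtain lb where lb: "set lb = BB" "distinct lb" using finite_distinct_list[OF fB] by blast
  have neA: "la \<noteq> []"
  proof
    assume "la = []"
    then have "BA = {}" using la by simp
    then have "dim W2 = 0" using BA(4) by simp
    then show False using dpos2 by linarith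
  qed
  have neB: "lb \<noteq> []"
  proof
    assume "lb = []"
    then have "BB = {}" using lb by simp
    then have "dim W1 = 0" using BB(4) by simp
    then show False using dpos1 by linarith
  qed
  have disj: "BA \<inter> BB = {}"
  proof (rule ccontr)
    assume "BA \<inter> BB \<noteq> {}"
    then obtain x where x: "x \<in> BA" "x \<in> BB" by blast
    then have "x \<in> W1 \<inter> W2" using BA(1) BB(1) by blast
    then have "x = 0" using W12 by blast
    then show False using x BA(2) dependent_zero by blast
  qed
  have spU: "span (BA \<union> BB) = UNIV"
  proof -
    have "m \<in> span (BA \<union> BB)" for m
    proof -
      obtain m1 m2 where "m1 \<in> W1" "m2 \<in> W2" "m = m1 + m2" using Wsum by blast
      then have "m2 \<in> span BA" "m1 \<in> span BB" using BA BB by auto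
      moreover have "m = m2 + m1" using \<open>m = m1 + m2\<close> by (simp add: add.commute)
      ultimately show ?thesis unfolding span_Un by blast
    qed
    then show ?thesis by blast
  qed
  have indU: "independent (BA \<union> BB)"
  proof -
    have "card (BA \<union> BB) = dim (UNIV :: (real^'p) set)"
      using card_Un_disjoint[OF fA fB disj] BA BB dW1 dW2 dZ by simp
    then show ?thesis using card_eq_dim[of "BA \<union> BB" UNIV] fA fB spU by simp
  qed
  define As where "As = map (Mat C) la"
  define Bs where "Bs = map (Mat C) lb"
  have setAB: "set (As @ Bs) = Mat C ` (BA \<union> BB)" by (simp add: As_def Bs_def la lb image_Un)
  have injM: "inj_on (Mat C) X" for X by (rule inj_on_subset[OF Mat_inj subset_UNIV])
  have dist: "distinct (As @ Bs)"
  proof -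
    have "distinct (la @ lb)" using la lb disj by simp
    then have "distinct (map (Mat C) (la @ lb))" using injM by (simp only: distinct_map)
    then show ?thesis by (simp add: As_def Bs_def)
  qed
  have ind: "independent (set (As @ Bs))"
    unfolding setAB by (rule linear_independent_injective_image[OF linear_Mat indU injM])
  have sp: "span (set (As @ Bs)) = span (range C)"
    unfolding setAB linear_span_image[OF linear_Mat] spU range_Mat ..
  have decV': "\<exists>a\<in>V2. \<exists>b\<in>V1. x = a + b" for x
  proof -
    obtain a b where "a \<in> V1" "b \<in> V2" "x = a + b" using decV by blast
    then have "b \<in> V2 \<and> a \<in> V1 \<and> x = b + a" by (simp add: add.commute)
    then show ?thesis by blast
  qed
  have Wsum1: "\<exists>m1\<in>W1. \<exists>m2\<in>W2. m = m1 + m2" for m using Wsum by blast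
  have Wsum2: "\<exists>m1\<in>W2. \<exists>m2\<in>W1. m = m1 + m2" for m
  proof -
    obtain a b where "a \<in> W1" "b \<in> W2" "m = a + b" using Wsum1 by blast
    then have "b \<in> W2 \<and> a \<in> W1 \<and> m = b + a" by (simp add: add.commute)
    then show ?thesis by blast
  qed
  have KA: "(\<Inter>A\<in>set As. mker A) = V2"
    unfolding As_def set_map la(1)
    by (rule ker_char[OF decV kill1 kill2 Wsum1 BA(1) BA(3)])
  have KB: "(\<Inter>A\<in>set Bs. mker A) = V1"
    unfolding Bs_def set_map lb(1)
    by (rule ker_char[OF decV' kill2 kill1 Wsum2 BB(1) BB(3)])
  have "{a + b | a b. a \<in> V1 \<and> b \<in> V2} = UNIV" using decV by blast
  then show ?thesis
    using neA neB dist ind sp KA KB V12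
    by (intro exI[of _ As] exI[of _ Bs]) (simp add: As_def Bs_def Let_def)
qed

end

theorem mainTheorem9:
  fixes C :: "'p::finite \<Rightarrow> real^'q::finite^'q"
  assumes skew: "\<And>k. transpose (C k) = - C k"
    and derived: "derived_alg C = {0} \<times> UNIV"
    and center: "center_alg C = {0} \<times> UNIV"
  shows "decomposable C \<longleftrightarrow>
    (\<exists>As Bs :: (real^'q^'q) list.
        As \<noteq> [] \<and> Bs \<noteq> [] \<and> distinct (As @ Bs) \<and> independent (set (As @ Bs))
      \<and> span (set (As @ Bs)) = span (range C)
      \<and> (let V2 = (\<Inter>A\<in>set As. mker A); V1 = (\<Inter>B\<in>set Bs. mker B)
         in V1 \<inter> V2 = {0} \<and> {a + b | a b. a \<in> V1 \<and> b \<in> V2} = UNIV))"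
proof -
  interpret nilp C by unfold_locales (fact skew derived center)+
  show ?thesis
  proof
    assume "decomposable C"
    then show "\<exists>As Bs :: (real^'q^'q) list.
        As \<noteq> [] \<and> Bs \<noteq> [] \<and> distinct (As @ Bs) \<and> independent (set (As @ Bs))
      \<and> span (set (As @ Bs)) = span (range C)
      \<and> (let V2 = (\<Inter>A\<in>set As. mker A); V1 = (\<Inter>B\<in>set Bs. mker B)
         in V1 \<inter> V2 = {0} \<and> {a + b | a b. a \<in> V1 \<and> b \<in> V2} = UNIV)"
      by (rule fwd_dir)
  next
    assume "\<exists>As Bs :: (real^'q^'q) list.
        As \<noteq> [] \<and> Bs \<noteq> [] \<and> distinct (As @ Bs) \<and> independent (set (As @ Bs))
      \<and> span (set (As @ Bs)) = span (range C)
      \<and> (let V2 = (\<Inter>A\<in>set As. mker A); V1 = (\<Inter>B\<in>set Bs. mker B)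
         in V1 \<inter> V2 = {0} \<and> {a + b | a b. a \<in> V1 \<and> b \<in> V2} = UNIV)"
    then obtain As Bs :: "(real^'q^'q) list" where
      h: "As \<noteq> []" "Bs \<noteq> []" "independent (set (As @ Bs))"
         "span (set (As @ Bs)) = span (range C)"
         "(\<Inter>B\<in>set Bs. mker B) \<inter> (\<Inter>A\<in>set As. mker A) = {0}"
         "{a + b | a b. a \<in> (\<Inter>B\<in>set Bs. mker B) \<and> b \<in> (\<Inter>A\<in>set As. mker A)} = UNIV"
      unfolding Let_def by blast
    show "decomposable C"
      by (rule back_dir[OF h(1) h(2) h(3) h(4) refl refl h(5) h(6)])
  qed
qed

end
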